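(* Let $l,n$ be positive integers, $\mathbf{x}_1,\dots,\mathbf{x}_l\in\mathbb{R}^n$, $y_1,\dots,y_l\in\mathbb{R}$, $a_1,\dots,a_l,b_1,\dots,b_l\in\mathbb{R}$, and let $\alpha<\beta$ be real numbers. Let $\mathbf Z\in\mathbb{R}^{l\times n}$ have $i$-th row $a_i\mathbf x_i^T$ and $\bar{\mathbf y}=(b_1y_1,\dots,b_ly_l)^T$. For $C>0$ let $\theta^*(C)$ denote an optimal solution of $$\min_{\theta\in[\alpha,\beta]^l}\ \tfrac{C}{2}\|\mathbf Z^T\theta\|^2-\langle\bar{\mathbf y},\theta\rangle.$$ Then for any $C>C_0>0$ and any such optimal solutions $\theta^*(C)$, $\theta^*(C_0)$, $$\Big\|\mathbf Z^T\theta^*(C)-\tfrac{C_0+C}{2C}\mathbf Z^T\theta^*(C_0)\Big\|\le\tfrac{C-C_0}{2C}\|\mathbf Z^T\theta^*(C_0)\|.$$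
   Context: In the paper this is the dual of the problem $\min_{\mathbf w}\frac12\|\mathbf w\|^2+C\sum_{i}\varphi(\mathbf w^T(a_i\mathbf x_i)+b_iy_i)$, where $\varphi:\mathbb{R}\to[0,\infty)$ is nonconstant, continuous and sublinear, and $[\alpha,\beta]$ is the interval on which the conjugate $\varphi^*$ vanishes ($\varphi^*=+\infty$ outside it). $\|\cdot\|$ is the Euclidean norm. *)

theory Defs
  imports "HOL-Analysis.Analysis"
begin

definition Zmat :: "('l::finite \<Rightarrow> real) \<Rightarrow> ('l \<Rightarrow> real ^ 'n::finite) \<Rightarrow> real ^ 'n ^ 'l" where
  "Zmat a x = (\<chi> i. a i *\<^sub>R x i)"

definition ybar :: "('l::finite \<Rightarrow> real) \<Rightarrow> ('l \<Rightarrow> real) \<Rightarrow> real ^ 'l" where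
  "ybar b y = (\<chi> i. b i * y i)"

definition dual_obj :: "real \<Rightarrow> real ^ 'n::finite ^ 'l::finite \<Rightarrow> real ^ 'l \<Rightarrow> real ^ 'l \<Rightarrow> real" where
  "dual_obj C Z yb \<theta> = C / 2 * (norm (transpose Z *v \<theta>))\<^sup>2 - inner yb \<theta>"

definition box' :: "real \<Rightarrow> real \<Rightarrow> (real ^ 'l::finite) set" where
  "box' \<alpha> \<beta> = {\<theta>. \<forall>i. \<alpha> \<le> \<theta> $ i \<and> \<theta> $ i \<le> \<beta>}"

definition is_dual_opt :: "real \<Rightarrow> real ^ 'n::finite ^ 'l::finite \<Rightarrow> real ^ 'l \<Rightarrow> real \<Rightarrow> real \<Rightarrow> real ^ 'l \<Rightarrow> bool" where
  "is_dual_opt C Z yb \<alpha> \<beta> \<theta> \<longleftrightarrow> \<theta> \<in> box' \<alpha> \<beta> \<and>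
     (\<forall>\<eta>\<in>box' \<alpha> \<beta>. dual_obj C Z yb \<theta> \<le> dual_obj C Z yb \<eta>)"

end

theory Submission
  imports Defs
begin

lemma small_t:
  fixes g K :: real
  assumes K: "K \<ge> 0" and h: "\<And>t. 0 < t \<Longrightarrow> t \<le> 1 \<Longrightarrow> g + t * K \<ge> 0"
  shows "g \<ge> 0"
proof (rule ccontr)
  assume "\<not> g \<ge> 0"
  hence g: "g < 0" by simp
  define t where "t = min 1 (-g / (2*K+1))"
  have "-g / (2*K+1) > 0" using g K by (intro divide_pos_pos) auto
  hence tp: "0 < t" by (simp add: t_def)
  have t1: "t \<le> 1" by (simp add: t_def)
  have "t \<le> -g / (2*K+1)" by (simp add: t_def)
  hence "t * (2*K+1) \<le> -g" using K by (simp add: field_simps)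
  moreover have "0 \<le> t * K" using tp K by simp
  moreover have "t * (2*K+1) = 2 * (t * K) + t" by (simp add: algebra_simps)
  ultimately have "t * K < -g" using tp by linarith
  with h[OF tp t1] show False by simp
qed

lemma normsq_add:
  fixes p q :: "'a::real_inner"
  shows "(norm (p + t *\<^sub>R q))\<^sup>2 = (norm p)\<^sup>2 + 2 * t * inner p q + t\<^sup>2 * (norm q)\<^sup>2"
proof -
  have "(norm (p + t *\<^sub>R q))\<^sup>2 = inner (p + t *\<^sub>R q) (p + t *\<^sub>R q)"
    by (rule power2_norm_eq_inner)
  also have "\<dots> = inner p p + 2 * t * inner p q + t\<^sup>2 * inner q q"
    by (simp only: inner_add_left inner_add_right inner_scaleR_left inner_scaleR_right inner_commute[of q p]) (simp add: power2_eq_square algebra_simps)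
  finally show ?thesis by (simp add: power2_norm_eq_inner)
qed

lemma vi:
  fixes Z :: "real ^ 'n::finite ^ 'l::finite"
  assumes opt: "is_dual_opt C Z yb \<alpha> \<beta> \<theta>" and eta: "\<eta> \<in> box' \<alpha> \<beta>" and C: "C > 0"
  shows "C * inner (transpose Z *v \<theta>) (transpose Z *v \<eta> - transpose Z *v \<theta>) - inner yb (\<eta> - \<theta>) \<ge> 0"
proof -
  let ?L = "\<lambda>v. transpose Z *v v"
  define d where "d = \<eta> - \<theta>"
  have th: "\<theta> \<in> box' \<alpha> \<beta>" using opt by (simp add: is_dual_opt_def)
  define g where "g = C * inner (?L \<theta>) (?L d) - inner yb d"
  define K where "K = C / 2 * (norm (?L d))\<^sup>2"
  have K0: "K \<ge> 0" using C by (simp add: K_def)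
  have "g + t * K \<ge> 0" if t: "0 < t" "t \<le> 1" for t
  proof -
    have inb: "\<theta> + t *\<^sub>R d \<in> box' \<alpha> \<beta>"
    proof -
      { fix i
        have a1: "\<alpha> \<le> \<theta> $ i" "\<theta> $ i \<le> \<beta>" "\<alpha> \<le> \<eta> $ i" "\<eta> $ i \<le> \<beta>"
          using th eta by (auto simp: box'_def)
        have e: "(\<theta> + t *\<^sub>R d) $ i = (1 - t) * \<theta> $ i + t * \<eta> $ i"
          by (simp add: d_def algebra_simps)
        have "(1 - t) * \<alpha> \<le> (1 - t) * \<theta> $ i" "t * \<alpha> \<le> t * \<eta> $ i"
             "(1 - t) * \<theta> $ i \<le> (1 - t) * \<beta>" "t * \<eta> $ i \<le> t * \<beta>"
          using a1 t by (auto intro: mult_left_mono)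
        hence "\<alpha> \<le> (\<theta> + t *\<^sub>R d) $ i \<and> (\<theta> + t *\<^sub>R d) $ i \<le> \<beta>"
          unfolding e by (simp add: algebra_simps) }
      thus ?thesis by (simp add: box'_def)
    qed
    have le: "dual_obj C Z yb \<theta> \<le> dual_obj C Z yb (\<theta> + t *\<^sub>R d)"
      using opt inb by (simp add: is_dual_opt_def)
    have Ld: "?L (\<theta> + t *\<^sub>R d) = ?L \<theta> + t *\<^sub>R ?L d"
      by (simp add: matrix_vector_right_distrib matrix_vector_mult_scaleR)
    have "dual_obj C Z yb (\<theta> + t *\<^sub>R d) - dual_obj C Z yb \<theta> = t * (g + t * K)"
      unfolding dual_obj_def Ld g_def K_def normsq_add
      by (simp add: inner_add_right algebra_simps power2_eq_square)
    with le have "0 \<le> t * (g + t * K)" by simp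
    thus ?thesis using t by (simp add: zero_le_mult_iff)
  qed
  hence "g \<ge> 0" using small_t[OF K0] by blast
  thus ?thesis by (simp add: g_def d_def matrix_vector_mult_diff_distrib)
qed

theorem theorem2:
  fixes x :: "'l::finite \<Rightarrow> real ^ 'n::finite"
    and y a b :: "'l \<Rightarrow> real"
    and \<alpha> \<beta> C C\<^sub>0 :: real
    and \<theta>C \<theta>C0 :: "real ^ 'l"
  assumes "\<alpha> < \<beta>"
    and "0 < C\<^sub>0" and "C\<^sub>0 < C"
    and "is_dual_opt C (Zmat a x) (ybar b y) \<alpha> \<beta> \<theta>C"
    and "is_dual_opt C\<^sub>0 (Zmat a x) (ybar b y) \<alpha> \<beta> \<theta>C0"
  shows "norm (transpose (Zmat a x) *v \<theta>C
               - ((C\<^sub>0 + C) / (2 * C)) *\<^sub>R (transpose (Zmat a x) *v \<theta>C0))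
         \<le> (C - C\<^sub>0) / (2 * C) * norm (transpose (Zmat a x) *v \<theta>C0)"
proof -
  define u where "u = transpose (Zmat a x) *v \<theta>C"
  define v where "v = transpose (Zmat a x) *v \<theta>C0"
  have b1: "\<theta>C \<in> box' \<alpha> \<beta>" "\<theta>C0 \<in> box' \<alpha> \<beta>" using assms(4,5) by (auto simp: is_dual_opt_def)
  have C: "C > 0" using assms by simp
  have i1: "C * inner u (v - u) - inner (ybar b y) (\<theta>C0 - \<theta>C) \<ge> 0"
    using vi[OF assms(4) b1(2) C] unfolding u_def v_def .
  have i2: "C\<^sub>0 * inner v (u - v) - inner (ybar b y) (\<theta>C - \<theta>C0) \<ge> 0"
    using vi[OF assms(5) b1(1) assms(2)] unfolding u_def v_def .
  have s: "inner (ybar b y) (\<theta>C - \<theta>C0) = - inner (ybar b y) (\<theta>C0 - \<theta>C)"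
    by (simp add: inner_diff_right)
  have key: "C * inner u (v - u) + C\<^sub>0 * inner v (u - v) \<ge> 0" using i1 i2 s by linarith
  hence key2: "C * inner u v - C * inner u u + C\<^sub>0 * inner u v - C\<^sub>0 * inner v v \<ge> 0"
    by (simp only: inner_diff_right inner_commute[of v u] right_diff_distrib)
  define c where "c = (C\<^sub>0 + C) / (2 * C)"
  define r where "r = (C - C\<^sub>0) / (2 * C)"
  have r0: "r \<ge> 0" using assms by (simp add: r_def)
  have "(norm (u - c *\<^sub>R v))\<^sup>2 = inner (u - c *\<^sub>R v) (u - c *\<^sub>R v)"
    by (rule power2_norm_eq_inner)
  also have "\<dots> = inner u u - 2 * c * inner u v + c^2 * inner v v"
    by (simp only: inner_diff_left inner_diff_right inner_scaleR_left inner_scaleR_right inner_commute[of v u]) (simp add: power2_eq_square algebra_simps)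
  also have "\<dots> \<le> r^2 * inner v v"
  proof -
    have h1: "c^2 - r^2 = C\<^sub>0 / C" unfolding c_def r_def using C
      by (simp add: power_divide diff_divide_distrib[symmetric] power2_eq_square field_simps)
    have h2: "2 * c = (C\<^sub>0 + C) / C" using C by (simp add: c_def field_simps)
    have e1: "c^2 * inner v v = r^2 * inner v v + C\<^sub>0 / C * inner v v"
      using h1 by (metis add_diff_cancel_left' diff_add_cancel distrib_right)
    have e2: "2 * c * inner u v = (C\<^sub>0 + C) / C * inner u v" using h2 by simp
    have e3: "C * (inner u u - (C\<^sub>0 + C) / C * inner u v + C\<^sub>0 / C * inner v v)
            = C * inner u u - (C\<^sub>0 + C) * inner u v + C\<^sub>0 * inner v v"
      using C by (simp add: right_diff_distrib distrib_left)
    have "C * inner u u - (C\<^sub>0 + C) * inner u v + C\<^sub>0 * inner v v \<le> 0"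
      using key2 by (simp only: distrib_right)
    hence "C * (inner u u - (C\<^sub>0 + C) / C * inner u v + C\<^sub>0 / C * inner v v) \<le> 0"
      using e3 by simp
    hence "inner u u - (C\<^sub>0 + C) / C * inner u v + C\<^sub>0 / C * inner v v \<le> 0"
      using C by (simp add: mult_le_0_iff)
    thus ?thesis using e1 e2 by linarith
  qed
  also have "\<dots> = (r * norm v)\<^sup>2" by (simp add: power2_norm_eq_inner power_mult_distrib)
  finally have sq: "(norm (u - c *\<^sub>R v))\<^sup>2 \<le> (r * norm v)\<^sup>2" .
  have "0 \<le> r * norm v" using r0 by simp
  with sq have "norm (u - c *\<^sub>R v) \<le> r * norm v" by (rule power2_le_imp_le)
  thus ?thesis unfolding u_def v_def c_def r_def .
qed

end
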